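(* Let $(L,\vee,\wedge,\odot,\rightarrow,0,1)$ be a residuated lattice. The following are equivalent: (i) $L$ is a BL-algebra; (ii) for all $x,y,z\in L$, if $x\odot(x\rightarrow y)\leq z$, then $(x\rightarrow z)\vee(y\rightarrow z)=1$; (iii) $[x\odot(x\rightarrow y)]\rightarrow z=(x\rightarrow z)\vee(y\rightarrow z)$ for all $x,y,z\in L$.
   Context: A (commutative) residuated lattice is an algebra $(L,\wedge,\vee,\odot,\rightarrow,0,1)$ such that $(L,\wedge,\vee,0,1)$ is a bounded lattice, $(L,\odot,1)$ is a commutative ordered monoid, and $z\leq x\rightarrow y$ iff $x\odot z\leq y$ for all $x,y,z\in L$. A BL-algebra is a residuated lattice satisfying prelinearity $(x\rightarrow y)\vee(y\rightarrow x)=1$ and divisibility $x\odot(x\rightarrow y)=x\wedge y$ for all $x,y$. *)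

theory Defs
  imports Main
begin

text \<open>A (commutative) residuated lattice on a bounded lattice type 'a,
  given by the monoid operation mult and the residuum imp
  (0 = bot, 1 = top, order = the lattice order).\<close>

definition residuated_lattice :: "('a::bounded_lattice \<Rightarrow> 'a \<Rightarrow> 'a) \<Rightarrow> ('a \<Rightarrow> 'a \<Rightarrow> 'a) \<Rightarrow> bool" where
  "residuated_lattice mult imp \<longleftrightarrow>
     (\<forall>x y z. mult (mult x y) z = mult x (mult y z)) \<and>
     (\<forall>x y. mult x y = mult y x) \<and>
     (\<forall>x. mult x top = x) \<and>
     (\<forall>x y z. x \<le> y \<longrightarrow> mult x z \<le> mult y z) \<and>
     (\<forall>x y z. z \<le> imp x y \<longleftrightarrow> mult x z \<le> y)"

definition BL_algebra :: "('a::bounded_lattice \<Rightarrow> 'a \<Rightarrow> 'a) \<Rightarrow> ('a \<Rightarrow> 'a \<Rightarrow> 'a) \<Rightarrow> bool" where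
  "BL_algebra mult imp \<longleftrightarrow>
     residuated_lattice mult imp \<and>
     (\<forall>x y. sup (imp x y) (imp y x) = top) \<and>
     (\<forall>x y. mult x (imp x y) = inf x y)"

end

theory Submission
  imports Defs
begin

context
  fixes mult imp :: "'a::bounded_lattice \<Rightarrow> 'a \<Rightarrow> 'a"
  assumes R: "residuated_lattice mult imp"
begin

lemma res: "z \<le> imp x y \<longleftrightarrow> mult x z \<le> y"
  using R unfolding residuated_lattice_def by blast
lemma comm: "mult x y = mult y x"
  using R unfolding residuated_lattice_def by blast
lemma assoc: "mult (mult x y) z = mult x (mult y z)"
  using R unfolding residuated_lattice_def by blast
lemma unit: "mult x top = x"
  using R unfolding residuated_lattice_def by blast
lemma monor: "x \<le> y \<Longrightarrow> mult x z \<le> mult y z"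
  using R unfolding residuated_lattice_def by blast
lemma monol: "x \<le> y \<Longrightarrow> mult z x \<le> mult z y"
  using monor comm by metis
lemma mp: "mult x (imp x y) \<le> y"
  using res by blast
lemma top_imp: "imp a b = top \<longleftrightarrow> a \<le> b"
  by (metis res unit top.extremum top.extremum_uniqueI)
lemma imp_anti: "a \<le> b \<Longrightarrow> imp b z \<le> imp a z"
  by (meson res mp monor order_trans)
lemma imp_mono: "a \<le> b \<Longrightarrow> imp z a \<le> imp z b"
  by (meson res mp order_trans)
lemma le_left: "mult x y \<le> x"
  by (metis monol top.extremum unit)
lemma le_right: "mult x y \<le> y"
  by (metis le_left comm)
lemma mp_inf: "mult x (imp x y) \<le> inf x y"
  by (simp add: le_left mp)
lemma dist: "mult a (sup b c) = sup (mult a b) (mult a c)"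
proof (rule order.antisym)
  have "b \<le> imp a (sup (mult a b) (mult a c))" "c \<le> imp a (sup (mult a b) (mult a c))"
    by (simp_all add: res)
  then show "mult a (sup b c) \<le> sup (mult a b) (mult a c)"
    using res by (metis le_sup_iff)
  show "sup (mult a b) (mult a c) \<le> mult a (sup b c)"
    by (simp add: monol)
qed

lemma i_iii:
  assumes pl: "\<forall>x y. sup (imp x y) (imp y x) = top"
    and dv: "\<forall>x y. mult x (imp x y) = inf x y"
  shows "imp (mult x (imp x y)) z = sup (imp x z) (imp y z)"
proof (rule order.antisym)
  let ?w = "imp (inf x y) z"
  have a: "mult (imp x y) ?w \<le> imp x z"
    unfolding res using dv assoc mp by metis
  have b: "mult (imp y x) ?w \<le> imp y z"
    unfolding res using dv assoc mp by (metis inf_commute)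
  have "?w = mult ?w (sup (imp x y) (imp y x))" using pl unit by simp
  also have "\<dots> = sup (mult (imp x y) ?w) (mult (imp y x) ?w)"
    by (simp add: dist comm)
  also have "\<dots> \<le> sup (imp x z) (imp y z)" using a b sup_mono by blast
  finally show "imp (mult x (imp x y)) z \<le> sup (imp x z) (imp y z)" using dv by simp
  show "sup (imp x z) (imp y z) \<le> imp (mult x (imp x y)) z"
    using dv imp_anti by simp
qed

lemma iii_ii:
  assumes "\<forall>x y z. imp (mult x (imp x y)) z = sup (imp x z) (imp y z)"
  shows "\<forall>x y z. mult x (imp x y) \<le> z \<longrightarrow> sup (imp x z) (imp y z) = top"
  using assms top_imp by metis

lemma ii_i:
  assumes H: "\<forall>x y z. mult x (imp x y) \<le> z \<longrightarrow> sup (imp x z) (imp y z) = top"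
  shows "BL_algebra mult imp"
proof -
  have dv: "mult x (imp x y) = inf x y" for x y
  proof (rule order.antisym)
    show "mult x (imp x y) \<le> inf x y" by (rule mp_inf)
    let ?z = "mult x (imp x y)"
    have t: "sup (imp x ?z) (imp y ?z) = top" using H by blast
    have "inf x y = mult (inf x y) (sup (imp x ?z) (imp y ?z))" using t unit by simp
    also have "\<dots> = sup (mult (inf x y) (imp x ?z)) (mult (inf x y) (imp y ?z))"
      by (rule dist)
    also have "\<dots> \<le> ?z"
    proof (rule sup_least)
      show "mult (inf x y) (imp x ?z) \<le> ?z"
        by (meson inf_le1 monor mp order_trans)
      show "mult (inf x y) (imp y ?z) \<le> ?z"
        by (meson inf_le2 monor mp order_trans)
    qed
    finally show "inf x y \<le> ?z" .
  qed
  have pl: "sup (imp x y) (imp y x) = top" for x y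
  proof -
    have "sup (imp x (inf x y)) (imp y (inf x y)) = top" using H dv by simp
    moreover have "imp x (inf x y) \<le> imp x y" "imp y (inf x y) \<le> imp y x"
      by (simp_all add: imp_mono)
    ultimately show ?thesis by (metis sup_mono top.extremum_uniqueI)
  qed
  show ?thesis unfolding BL_algebra_def using R dv pl by blast
qed

end

theorem proposition3p4:
  fixes mult imp :: "'a::bounded_lattice \<Rightarrow> 'a \<Rightarrow> 'a"
  assumes "residuated_lattice mult imp"
  shows "(BL_algebra mult imp
            \<longleftrightarrow> (\<forall>x y z. mult x (imp x y) \<le> z \<longrightarrow> sup (imp x z) (imp y z) = top))
       \<and> (BL_algebra mult imp
            \<longleftrightarrow> (\<forall>x y z. imp (mult x (imp x y)) z = sup (imp x z) (imp y z)))"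
proof -
  have A: "BL_algebra mult imp \<Longrightarrow> (\<forall>x y z. imp (mult x (imp x y)) z = sup (imp x z) (imp y z))"
    using i_iii[OF assms] unfolding BL_algebra_def by blast
  have B: "(\<forall>x y z. imp (mult x (imp x y)) z = sup (imp x z) (imp y z)) \<Longrightarrow>
     (\<forall>x y z. mult x (imp x y) \<le> z \<longrightarrow> sup (imp x z) (imp y z) = top)"
    by (rule iii_ii[OF assms])
  have C: "(\<forall>x y z. mult x (imp x y) \<le> z \<longrightarrow> sup (imp x z) (imp y z) = top) \<Longrightarrow> BL_algebra mult imp"
    by (rule ii_i[OF assms])
  show ?thesis using A B C by blast
qed

end
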